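(* Assume the setting of the context, with $\rho_\varphi=-\mathbf B\cdot\nabla\varphi$ nowhere zero. For a smooth function $h(t,\mathbf x)$ define the vector field on $\mathbb R\times D$ $$U=\rho_\varphi^{-1}\Big[-B(h)\,(\partial_t+v)+\frac{dh}{dt}\,\mathbf B\cdot\nabla+(\nabla\varphi\times\nabla h)\cdot\nabla\Big],$$ where $B(h)=\mathbf B\cdot\nabla h$ and $dh/dt=\partial_t h+\mathbf v\cdot\nabla h$. Then: (a) $i(U)\Omega=dh$ for every smooth $h$, so $U$ is a Hamiltonian vector field of $\Omega$ with Hamiltonian $h$; also $i(\rho_\varphi^{-1}\mathbf B\cdot\nabla)\Omega=dt$, and $\rho_\varphi^{-1}\mathbf B\cdot\nabla$ is a symmetry of $\partial_t+v$. (b) If $h$ is conserved, i.e. $dh/dt=0$, then $U$ is an infinitesimal symmetry of $\partial_t+v$. (c) In that case, setting $W_0=\rho_\varphi^{-1}\mathbf B\cdot\nabla$ and $W_n=[W_{n-1},U]$ for $n\ge1$ (so $W_n=[\dots[[\rho_\varphi^{-1}B,U],U],\dots,U]$), every $W_n$ is a Hamiltonian vector field of $\Omega$ (so $\mathcal L_{W_n}\Omega=0$) and an infinitesimal symmetry of $\partial_t+v$.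
   Context: Setting: $D\subset\mathbb R^3$ is a simply connected open domain; $\mathbf v(t,\mathbf x)$ is a smooth divergence-free time-dependent vector field on $D$, $v=\mathbf v\cdot\nabla$, and $\partial_t+v$ is its suspension on $\mathbb R\times D$. $\mathbf B$ is a smooth divergence-free field with $\partial_t\mathbf B-\nabla\times(\mathbf v\times\mathbf B)=0$ and $\varphi$ is a smooth function with $\partial_t\varphi+\mathbf v\cdot\nabla\varphi=0$. $\Omega=-(\nabla\varphi+\mathbf v\times\mathbf B)\cdot d\mathbf x\wedge dt+\mathbf B\cdot(d\mathbf x\wedge d\mathbf x)$, where $\mathbf a\cdot d\mathbf x\wedge dt=\sum_i a_i\,dx^i\wedge dt$ and $\mathbf a\cdot(d\mathbf x\wedge d\mathbf x)=a_1\,dy\wedge dz+a_2\,dz\wedge dx+a_3\,dx\wedge dy$. A vector field $X$ is Hamiltonian for $\Omega$ with Hamiltonian $f$ if $i(X)\Omega=df$. A time-dependent vector field $U=\xi\partial_t+u$ on $\mathbb R\times D$ ($u$ having no $\partial_t$ component) is an infinitesimal symmetry of $\partial_t+v$ if $[\partial_t+v,\ \xi\partial_t+u]=(\xi_{,t}+v(\xi))(\partial_t+v)$. *)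

theory Defs
  imports "HOL-Analysis.Analysis"
begin

text \<open>Space-time points are pairs (t, x) with t real and x in R^3.
  A tangent vector at a point is a pair (a, alpha): a is the d/dt component,
  alpha the spatial component.\<close>

type_synonym pt = "real \<times> (real^3)"

fun Ck_on :: "nat \<Rightarrow> 'a::euclidean_space set \<Rightarrow> ('a \<Rightarrow> 'b::euclidean_space) \<Rightarrow> bool" where
  "Ck_on 0 S f = continuous_on S f"
| "Ck_on (Suc k) S f = (f differentiable_on S \<and>
      (\<forall>w. Ck_on k S (\<lambda>p. frechet_derivative f (at p) w)))"

definition smooth_on :: "'a::euclidean_space set \<Rightarrow> ('a \<Rightarrow> 'b::euclidean_space) \<Rightarrow> bool" where
  "smooth_on S f \<longleftrightarrow> (\<forall>k. Ck_on k S f)"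

definition dt :: "(pt \<Rightarrow> 'b::real_normed_vector) \<Rightarrow> pt \<Rightarrow> 'b" where
  "dt f p = frechet_derivative f (at p) (1, 0)"

definition dx :: "3 \<Rightarrow> (pt \<Rightarrow> 'b::real_normed_vector) \<Rightarrow> pt \<Rightarrow> 'b" where
  "dx i f p = frechet_derivative f (at p) (0, axis i 1)"

definition grad :: "(pt \<Rightarrow> real) \<Rightarrow> pt \<Rightarrow> real^3" where
  "grad f p = (\<chi> i. dx i f p)"

definition divg :: "(pt \<Rightarrow> real^3) \<Rightarrow> pt \<Rightarrow> real" where
  "divg F p = (\<Sum>i\<in>UNIV. dx i F p $ i)"

definition curl :: "(pt \<Rightarrow> real^3) \<Rightarrow> pt \<Rightarrow> real^3" where
  "curl F p = vector [dx 2 F p $ 3 - dx 3 F p $ 2,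
                      dx 3 F p $ 1 - dx 1 F p $ 3,
                      dx 1 F p $ 2 - dx 2 F p $ 1]"

text \<open>A vector field acting on a function (directional derivative), and the Lie bracket
  [X,Y] with the convention [X,Y] f = X(Y f) - Y(X f).\<close>
definition vf_apply :: "(pt \<Rightarrow> pt) \<Rightarrow> (pt \<Rightarrow> 'b::real_normed_vector) \<Rightarrow> pt \<Rightarrow> 'b" where
  "vf_apply X f p = frechet_derivative f (at p) (X p)"

definition lie :: "(pt \<Rightarrow> pt) \<Rightarrow> (pt \<Rightarrow> pt) \<Rightarrow> pt \<Rightarrow> pt" where
  "lie X Y p = frechet_derivative Y (at p) (X p) - frechet_derivative X (at p) (Y p)"

definition suspension :: "(pt \<Rightarrow> real^3) \<Rightarrow> pt \<Rightarrow> pt" where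
  "suspension v p = (1, v p)"

definition inf_symmetry :: "pt set \<Rightarrow> (pt \<Rightarrow> real^3) \<Rightarrow> (pt \<Rightarrow> pt) \<Rightarrow> bool" where
  "inf_symmetry M v U \<longleftrightarrow>
     (\<forall>p\<in>M. lie (suspension v) U p =
        vf_apply (suspension v) (\<lambda>q. fst (U q)) p *\<^sub>R suspension v p)"

text \<open>2-forms on R x R^3 are given pointwise as bilinear maps on tangent vectors.
  The form Omega = -(grad phi + v x B).(dx wedge dt) + B.(dx wedge dx):
  for tangent vectors (a,alpha), (b,beta):
  (dx^i wedge dt) ((a,alpha),(b,beta)) = alpha_i b - beta_i a and
  B.(dx wedge dx)(alpha,beta) = B.(alpha x beta).\<close>
definition Omega :: "(pt \<Rightarrow> real) \<Rightarrow> (pt \<Rightarrow> real^3) \<Rightarrow> (pt \<Rightarrow> real^3) \<Rightarrow> pt \<Rightarrow> pt \<Rightarrow> pt \<Rightarrow> real" where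
  "Omega \<phi> v B p X Y =
     (let E = grad \<phi> p + cross3 (v p) (B p) in
       - (E \<bullet> snd X * fst Y - E \<bullet> snd Y * fst X) + B p \<bullet> cross3 (snd X) (snd Y))"

definition hamiltonian_with :: "pt set \<Rightarrow> (pt \<Rightarrow> pt \<Rightarrow> pt \<Rightarrow> real) \<Rightarrow> (pt \<Rightarrow> pt) \<Rightarrow> (pt \<Rightarrow> real) \<Rightarrow> bool" where
  "hamiltonian_with M Om X f \<longleftrightarrow> (\<forall>p\<in>M. \<forall>w. Om p (X p) w = frechet_derivative f (at p) w)"

definition hamiltonian_vf :: "pt set \<Rightarrow> (pt \<Rightarrow> pt \<Rightarrow> pt \<Rightarrow> real) \<Rightarrow> (pt \<Rightarrow> pt) \<Rightarrow> bool" where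
  "hamiltonian_vf M Om X \<longleftrightarrow> (\<exists>f. smooth_on M f \<and> hamiltonian_with M Om X f)"

text \<open>Lie derivative of a 2-form along X, evaluated on constant vector fields v, w:
  (L_X Om)_p(v,w) = X(Om(v,w))(p) + Om_p(DX_p v, w) + Om_p(v, DX_p w).\<close>
definition lie_deriv2 :: "(pt \<Rightarrow> pt) \<Rightarrow> (pt \<Rightarrow> pt \<Rightarrow> pt \<Rightarrow> real) \<Rightarrow> pt \<Rightarrow> pt \<Rightarrow> pt \<Rightarrow> real" where
  "lie_deriv2 X Om p v w =
     frechet_derivative (\<lambda>q. Om q v w) (at p) (X p)
     + Om p (frechet_derivative X (at p) v) w + Om p v (frechet_derivative X (at p) w)"

definition U_field :: "(pt \<Rightarrow> real) \<Rightarrow> (pt \<Rightarrow> real^3) \<Rightarrow> (pt \<Rightarrow> real^3) \<Rightarrow> (pt \<Rightarrow> real) \<Rightarrow> pt \<Rightarrow> pt" where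
  "U_field \<phi> v B h p =
     (let \<rho> = - (B p \<bullet> grad \<phi> p);
          Bh = B p \<bullet> grad h p;
          dh = dt h p + v p \<bullet> grad h p
      in inverse \<rho> *\<^sub>R ((- Bh) *\<^sub>R suspension v p + dh *\<^sub>R (0, B p)
                          + (0, cross3 (grad \<phi> p) (grad h p))))"

primrec W_seq :: "(pt \<Rightarrow> pt) \<Rightarrow> (pt \<Rightarrow> pt) \<Rightarrow> nat \<Rightarrow> pt \<Rightarrow> pt" where
  "W_seq W0 U 0 = W0"
| "W_seq W0 U (Suc n) = lie (W_seq W0 U n) U"

end

theory Submission
  imports Defs
begin


abbreviation FD :: "('a::real_normed_vector \<Rightarrow> 'b::real_normed_vector) \<Rightarrow> 'a \<Rightarrow> 'a \<Rightarrow> 'b" where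
  "FD f p \<equiv> frechet_derivative f (at p)"

lemma FD_hd: "f differentiable (at p) \<Longrightarrow> (f has_derivative FD f p) (at p)"
  using frechet_derivative_works by blast

lemma FD_eq: "(f has_derivative f') (at p) \<Longrightarrow> FD f p = f'"
  using frechet_derivative_at by metis

lemma FD_lin: "f differentiable (at p) \<Longrightarrow> linear (FD f p)"
  using FD_hd has_derivative_linear by blast

lemma FD_blin: "f differentiable (at p) \<Longrightarrow> bounded_linear (FD f p)"
  using FD_hd has_derivative_bounded_linear by blast

lemma FD_local:
  assumes "open M" "p \<in> M" "\<And>x. x \<in> M \<Longrightarrow> f x = g x"
  shows "FD f p = FD g p"
proof -
  have "\<And>f'. (f has_derivative f') (at p) \<longleftrightarrow> (g has_derivative f') (at p)"
    using has_derivative_transform_within_open[OF _ assms(1,2)] assms(3) by metis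
  then show ?thesis unfolding frechet_derivative_def by simp
qed

lemma FD_const: "FD (\<lambda>x. c) p = (\<lambda>w. 0)"
  by (rule FD_eq) simp

lemma FD_add: "f differentiable (at p) \<Longrightarrow> g differentiable (at p) \<Longrightarrow>
   FD (\<lambda>x. f x + g x) p w = FD f p w + FD g p w"
  by (subst FD_eq[OF has_derivative_add[OF FD_hd FD_hd]]) auto

lemma FD_diff: "f differentiable (at p) \<Longrightarrow> g differentiable (at p) \<Longrightarrow>
   FD (\<lambda>x. f x - g x) p w = FD f p w - FD g p w"
  by (subst FD_eq[OF has_derivative_diff[OF FD_hd FD_hd]]) auto

lemma FD_linc: "bounded_linear L \<Longrightarrow> f differentiable (at p) \<Longrightarrow>
   FD (\<lambda>x. L (f x)) p w = L (FD f p w)"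
  by (subst FD_eq[OF bounded_linear.has_derivative[OF _ FD_hd]]) auto

lemma FD_bil: "bounded_bilinear P \<Longrightarrow> f differentiable (at p) \<Longrightarrow> g differentiable (at p) \<Longrightarrow>
   FD (\<lambda>x. P (f x) (g x)) p w = P (f p) (FD g p w) + P (FD f p w) (g p)"
  by (subst FD_eq[OF bounded_bilinear.FDERIV[OF _ FD_hd FD_hd]]) auto

lemma FD_inv: "f differentiable (at p) \<Longrightarrow> f p \<noteq> (0::real) \<Longrightarrow>
   FD (\<lambda>x. inverse (f x)) p w = - (inverse (f p) * FD f p w * inverse (f p))"
  by (subst FD_eq[OF Deriv.has_derivative_inverse[OF _ FD_hd]]) auto

lemma FD_sum: "finite A \<Longrightarrow> (\<And>i. i \<in> A \<Longrightarrow> f i differentiable (at p)) \<Longrightarrow>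
   FD (\<lambda>x. \<Sum>i\<in>A. f i x) p w = (\<Sum>i\<in>A. FD (f i) p w)"
  by (subst FD_eq[OF has_derivative_sum[OF FD_hd]]) auto

lemma diff_lin: "bounded_linear L \<Longrightarrow> f differentiable (at x) \<Longrightarrow> (\<lambda>x. L (f x)) differentiable (at x)"
  using bounded_linear.has_derivative[OF _ FD_hd] differentiable_def by blast

lemma diff_bil: "bounded_bilinear P \<Longrightarrow> f differentiable (at x) \<Longrightarrow> g differentiable (at x) \<Longrightarrow>
   (\<lambda>x. P (f x) (g x)) differentiable (at x)"
  using bounded_bilinear.FDERIV[OF _ FD_hd FD_hd] differentiable_def by blast

lemma diff_inv: "f differentiable (at x) \<Longrightarrow> f x \<noteq> (0::real) \<Longrightarrow> (\<lambda>x. inverse (f x)) differentiable (at x)"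
  using Deriv.has_derivative_inverse[OF _ FD_hd] differentiable_def by blast

lemma FD_bl: "bounded_linear L \<Longrightarrow> FD L p = L"
  by (rule FD_eq) (simp add: bounded_linear_imp_has_derivative)

lemma FD_expand:
  fixes f :: "'a::euclidean_space \<Rightarrow> 'b::real_normed_vector"
  assumes "f differentiable (at p)"
  shows "FD f p w = (\<Sum>b\<in>Basis. (w \<bullet> b) *\<^sub>R FD f p b)"
proof -
  have "FD f p w = FD f p (\<Sum>b\<in>Basis. (w \<bullet> b) *\<^sub>R b)" by (simp add: euclidean_representation)
  also have "\<dots> = (\<Sum>b\<in>Basis. (w \<bullet> b) *\<^sub>R FD f p b)"
    using FD_lin[OF assms] by (simp add: linear_sum linear_cmul)
  finally show ?thesis .
qed

section \<open>C^k classes\<close>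

lemma Ck_mono: "Ck_on (Suc k) S f \<Longrightarrow> Ck_on k S f"
proof (induction k arbitrary: f)
  case 0 then show ?case by (simp add: differentiable_imp_continuous_on)
next
  case (Suc k) then show ?case by simp
qed

lemma Ck_le: "k \<le> m \<Longrightarrow> Ck_on m S f \<Longrightarrow> Ck_on k S f"
proof (induction m)
  case 0 then show ?case by simp
next
  case (Suc m) then show ?case using Ck_mono le_Suc_eq by blast
qed

lemma Ck_cont: "Ck_on k S f \<Longrightarrow> continuous_on S f"
  using Ck_le[of 0 k] by simp

lemma Ck_diff: "open S \<Longrightarrow> Ck_on (Suc k) S f \<Longrightarrow> x \<in> S \<Longrightarrow> f differentiable (at x)"
  by (simp add: differentiable_on_eq_differentiable_at)

lemma Ck_cong: "open S \<Longrightarrow> Ck_on k S f \<Longrightarrow> (\<And>x. x \<in> S \<Longrightarrow> f x = g x) \<Longrightarrow> Ck_on k S g"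
proof (induction k arbitrary: f g)
  case 0 then show ?case by (simp cong: continuous_on_cong)
next
  case (Suc k)
  have d: "f differentiable (at x)" if "x \<in> S" for x using Suc.prems that Ck_diff by blast
  have dg: "g differentiable (at x)" if "x \<in> S" for x
    using has_derivative_transform_within_open[OF FD_hd[OF d[OF that]] \<open>open S\<close> that] Suc.prems(3)
    unfolding differentiable_def by blast
  have e: "FD f x = FD g x" if "x \<in> S" for x using FD_local[OF \<open>open S\<close> that] Suc.prems(3) by blast
  show ?case
    using Suc.prems dg e Suc.IH[of "\<lambda>p. FD f p w" "\<lambda>p. FD g p w" for w]
    by (auto simp: differentiable_on_eq_differentiable_at)
qed

lemma Ck_const: "Ck_on k S (\<lambda>x. c)"
proof (induction k arbitrary: c)
  case 0 then show ?case by simp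
next
  case (Suc k) then show ?case by (simp add: FD_const)
qed

lemma Ck_add: "open S \<Longrightarrow> Ck_on k S f \<Longrightarrow> Ck_on k S g \<Longrightarrow> Ck_on k S (\<lambda>x. f x + g x)"
proof (induction k arbitrary: f g)
  case 0 then show ?case by (simp add: continuous_on_add)
next
  case (Suc k)
  show ?case
  proof (simp, intro conjI allI)
    show "(\<lambda>x. f x + g x) differentiable_on S" using Suc.prems by simp
    fix w
    show "Ck_on k S (\<lambda>p. FD (\<lambda>x. f x + g x) p w)"
      apply (rule Ck_cong[OF \<open>open S\<close> Suc.IH[of "\<lambda>p. FD f p w" "\<lambda>p. FD g p w"]])
      using Suc.prems by (auto simp: FD_add Ck_diff)
  qed
qed

lemma Ck_lin: "bounded_linear L \<Longrightarrow> open S \<Longrightarrow> Ck_on k S f \<Longrightarrow> Ck_on k S (\<lambda>x. L (f x))"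
proof (induction k arbitrary: f)
  case 0 then show ?case
    by (simp add: continuous_on_compose[OF _ linear_continuous_on[OF 0(1)], unfolded o_def])
next
  case (Suc k)
  show ?case
  proof (simp, intro conjI allI)
    show "(\<lambda>x. L (f x)) differentiable_on S" using Suc.prems
      by (auto simp: differentiable_on_eq_differentiable_at intro: diff_lin)
    fix w
    show "Ck_on k S (\<lambda>p. FD (\<lambda>x. L (f x)) p w)"
      apply (rule Ck_cong[OF \<open>open S\<close> Suc.IH[of "\<lambda>p. FD f p w"]])
      using Suc.prems by (auto simp: FD_linc Ck_diff)
  qed
qed

lemma Ck_bil: "bounded_bilinear P \<Longrightarrow> open S \<Longrightarrow> Ck_on k S f \<Longrightarrow> Ck_on k S g \<Longrightarrow>
    Ck_on k S (\<lambda>x. P (f x) (g x))"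
proof (induction k arbitrary: f g)
  case 0 then show ?case by (simp add: bounded_bilinear.continuous_on)
next
  case (Suc k)
  show ?case
  proof (simp, intro conjI allI)
    show "(\<lambda>x. P (f x) (g x)) differentiable_on S" using Suc.prems
      by (auto simp: differentiable_on_eq_differentiable_at intro: diff_bil)
    fix w
    have "Ck_on k S (\<lambda>x. P (f x) (FD g x w) + P (FD f x w) (g x))"
      apply (rule Ck_add[OF \<open>open S\<close>])
       apply (rule Suc.IH[OF Suc.prems(1,2) Ck_mono[OF Suc.prems(3)]])
      using Suc.prems(4) apply simp
       apply (rule Suc.IH[OF Suc.prems(1,2) _ Ck_mono[OF Suc.prems(4)]])
      using Suc.prems(3) by simp
    then show "Ck_on k S (\<lambda>p. FD (\<lambda>x. P (f x) (g x)) p w)"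
      apply (rule Ck_cong[OF \<open>open S\<close>])
      using Suc.prems by (auto simp: FD_bil Ck_diff)
  qed
qed

lemma Ck_inv: "open S \<Longrightarrow> Ck_on k S f \<Longrightarrow> (\<And>x. x \<in> S \<Longrightarrow> f x \<noteq> (0::real)) \<Longrightarrow>
    Ck_on k S (\<lambda>x. inverse (f x))"
proof (induction k arbitrary: f)
  case 0 then show ?case by (simp add: continuous_on_inverse)
next
  case (Suc k)
  show ?case
  proof (simp, intro conjI allI)
    show "(\<lambda>x. inverse (f x)) differentiable_on S" using Suc.prems
      by (auto simp: differentiable_on_eq_differentiable_at intro: diff_inv)
    fix w
    have i: "Ck_on k S (\<lambda>x. inverse (f x))" using Suc.prems Suc.IH Ck_mono by blast
    have "Ck_on k S (\<lambda>x. - (inverse (f x) * FD f x w * inverse (f x)))"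
      apply (rule Ck_lin[OF bounded_linear_minus[OF bounded_linear_ident] \<open>open S\<close>])
      apply (rule Ck_bil[OF bounded_bilinear_mult \<open>open S\<close> Ck_bil[OF bounded_bilinear_mult \<open>open S\<close>]])
      using i Suc.prems by auto
    then show "Ck_on k S (\<lambda>p. FD (\<lambda>x. inverse (f x)) p w)"
      apply (rule Ck_cong[OF \<open>open S\<close>])
      using Suc.prems by (auto simp: FD_inv Ck_diff)
  qed
qed

lemma Ck_sum: assumes "open S" "finite A" "\<And>i. i \<in> A \<Longrightarrow> Ck_on k S (f i)" shows
   "Ck_on k S (\<lambda>x. \<Sum>i\<in>A. f i x)"
  using assms(2,3)
proof (induction A rule: finite_induct)
  case empty then show ?case by (simp add: Ck_const)
next
  case (insert a A) then show ?case by (simp add: Ck_add assms(1))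
qed

section \<open>Smooth functions\<close>

lemma sm_diff: "open S \<Longrightarrow> smooth_on S f \<Longrightarrow> x \<in> S \<Longrightarrow> f differentiable (at x)"
  unfolding smooth_on_def using Ck_diff by blast

lemma sm_cont: "smooth_on S f \<Longrightarrow> continuous_on S f"
  unfolding smooth_on_def using Ck_cont by blast

lemma sm_FD: "smooth_on S f \<Longrightarrow> smooth_on S (\<lambda>p. FD f p w)"
  unfolding smooth_on_def by (metis Ck_on.simps(2))

lemma sm_cong: "open S \<Longrightarrow> smooth_on S f \<Longrightarrow> (\<And>x. x \<in> S \<Longrightarrow> f x = g x) \<Longrightarrow> smooth_on S g"
  unfolding smooth_on_def using Ck_cong by blast

lemma sm_const: "smooth_on S (\<lambda>x. c)"
  unfolding smooth_on_def using Ck_const by blast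

lemma sm_add: "open S \<Longrightarrow> smooth_on S f \<Longrightarrow> smooth_on S g \<Longrightarrow> smooth_on S (\<lambda>x. f x + g x)"
  unfolding smooth_on_def using Ck_add by blast

lemma sm_lin: "bounded_linear L \<Longrightarrow> open S \<Longrightarrow> smooth_on S f \<Longrightarrow> smooth_on S (\<lambda>x. L (f x))"
  unfolding smooth_on_def using Ck_lin by blast

lemma sm_bil: "bounded_bilinear P \<Longrightarrow> open S \<Longrightarrow> smooth_on S f \<Longrightarrow> smooth_on S g \<Longrightarrow>
    smooth_on S (\<lambda>x. P (f x) (g x))"
  unfolding smooth_on_def using Ck_bil by blast

lemma sm_inv: "open S \<Longrightarrow> smooth_on S f \<Longrightarrow> (\<And>x. x \<in> S \<Longrightarrow> f x \<noteq> (0::real)) \<Longrightarrow>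
    smooth_on S (\<lambda>x. inverse (f x))"
  unfolding smooth_on_def using Ck_inv by blast

lemma sm_sum: "open S \<Longrightarrow> finite A \<Longrightarrow> (\<And>i. i \<in> A \<Longrightarrow> smooth_on S (f i)) \<Longrightarrow>
   smooth_on S (\<lambda>x. \<Sum>i\<in>A. f i x)"
  unfolding smooth_on_def using Ck_sum by blast








lemma line_deriv:
  fixes f :: "'a::real_normed_vector \<Rightarrow> real"
  assumes "(f has_derivative f') (at (x + s *\<^sub>R u))"
  shows "((\<lambda>t. f (x + t *\<^sub>R u)) has_real_derivative f' u) (at s)"
proof -
  have "((\<lambda>t. x + t *\<^sub>R u) has_derivative (\<lambda>t. t *\<^sub>R u)) (at s)"
    by (auto intro!: derivative_eq_intros)
  from has_derivative_compose[OF this assms]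
  have "((\<lambda>t. f (x + t *\<^sub>R u)) has_derivative (\<lambda>t. f' (t *\<^sub>R u))) (at s)" .
  moreover have "\<And>t. t * f' u = f' (t *\<^sub>R u)"
    using linear_cmul[OF has_derivative_linear[OF assms]] by simp
  ultimately show ?thesis by (rule has_derivative_imp_has_field_derivative)
qed

lemma schwarz_aux:
  fixes f :: "'a::euclidean_space \<Rightarrow> real"
  assumes S: "open S" and h: "h > 0"
    and sub: "\<And>s t. s \<in> {0..h} \<Longrightarrow> t \<in> {0..h} \<Longrightarrow> p + s *\<^sub>R a + t *\<^sub>R b \<in> S"
    and df: "\<And>q. q \<in> S \<Longrightarrow> f differentiable (at q)"
    and dg: "\<And>q. q \<in> S \<Longrightarrow> (\<lambda>r. FD f r a) differentiable (at q)"
  shows "\<exists>s t. 0 < s \<and> s < h \<and> 0 < t \<and> t < h \<and>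
     f (p + h *\<^sub>R a + h *\<^sub>R b) - f (p + h *\<^sub>R a) - f (p + h *\<^sub>R b) + f p
        = h * (h * FD (\<lambda>r. FD f r a) (p + s *\<^sub>R a + t *\<^sub>R b) b)"
proof -
  define \<psi> where "\<psi> \<sigma> = f ((p + h *\<^sub>R b) + \<sigma> *\<^sub>R a) - f (p + \<sigma> *\<^sub>R a)" for \<sigma>
  have der: "DERIV \<psi> \<sigma> :> FD f (p + h *\<^sub>R b + \<sigma> *\<^sub>R a) a - FD f (p + \<sigma> *\<^sub>R a) a"
    if "0 \<le> \<sigma>" "\<sigma> \<le> h" for \<sigma>
  proof -
    have m1: "p + h *\<^sub>R b + \<sigma> *\<^sub>R a \<in> S" using sub[of \<sigma> h] that h by (simp add: algebra_simps)
    have m2: "p + \<sigma> *\<^sub>R a \<in> S" using sub[of \<sigma> 0] that h by simp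
    show ?thesis unfolding \<psi>_def
      by (intro DERIV_diff line_deriv FD_hd df m1 m2)
  qed
  obtain s where s: "0 < s" "s < h" "\<psi> h - \<psi> 0 = (h - 0) * (FD f (p + h *\<^sub>R b + s *\<^sub>R a) a - FD f (p + s *\<^sub>R a) a)"
    using MVT2[OF h, of \<psi>, OF der] by auto
  define kk where "kk \<tau> = FD f ((p + s *\<^sub>R a) + \<tau> *\<^sub>R b) a" for \<tau>
  have der2: "DERIV kk \<tau> :> FD (\<lambda>r. FD f r a) (p + s *\<^sub>R a + \<tau> *\<^sub>R b) b"
    if "0 \<le> \<tau>" "\<tau> \<le> h" for \<tau>
  proof -
    have m1: "p + s *\<^sub>R a + \<tau> *\<^sub>R b \<in> S" using sub[of s \<tau>] that s by simp
    show ?thesis unfolding kk_def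
      by (intro line_deriv FD_hd dg m1)
  qed
  obtain t where t: "0 < t" "t < h" "kk h - kk 0 = (h - 0) * FD (\<lambda>r. FD f r a) (p + s *\<^sub>R a + t *\<^sub>R b) b"
    using MVT2[OF h, of kk, OF der2] by auto
  have "f (p + h *\<^sub>R a + h *\<^sub>R b) - f (p + h *\<^sub>R a) - f (p + h *\<^sub>R b) + f p = \<psi> h - \<psi> 0"
    unfolding \<psi>_def by (simp add: add_ac)
  also have "\<dots> = h * (kk h - kk 0)" unfolding s(3) kk_def by (simp add: add_ac)
  also have "\<dots> = h * (h * FD (\<lambda>r. FD f r a) (p + s *\<^sub>R a + t *\<^sub>R b) b)" using t(3) by simp
  finally show ?thesis using s t by blast
qed

lemma schwarz:
  fixes f :: "'a::euclidean_space \<Rightarrow> real"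
  assumes S: "open S" "p \<in> S"
    and df: "\<And>q. q \<in> S \<Longrightarrow> f differentiable (at q)"
    and dga: "\<And>q. q \<in> S \<Longrightarrow> (\<lambda>r. FD f r a) differentiable (at q)"
    and dgb: "\<And>q. q \<in> S \<Longrightarrow> (\<lambda>r. FD f r b) differentiable (at q)"
    and ca: "continuous_on S (\<lambda>q. FD (\<lambda>r. FD f r a) q b)"
    and cb: "continuous_on S (\<lambda>q. FD (\<lambda>r. FD f r b) q a)"
  shows "FD (\<lambda>r. FD f r a) p b = FD (\<lambda>r. FD f r b) p a"
proof (rule ccontr)
  define A where "A q = FD (\<lambda>r. FD f r a) q b" for q
  define B where "B q = FD (\<lambda>r. FD f r b) q a" for q
  assume ne: "\<not> ?thesis"
  define e where "e = \<bar>A p - B p\<bar> / 2"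
  have e: "e > 0" using ne by (simp add: e_def A_def B_def)
  obtain d1 where d1: "d1 > 0" "\<And>q. q \<in> S \<Longrightarrow> dist q p < d1 \<Longrightarrow> dist (A q) (A p) < e"
    using ca S e unfolding continuous_on_iff A_def by blast
  obtain d2 where d2: "d2 > 0" "\<And>q. q \<in> S \<Longrightarrow> dist q p < d2 \<Longrightarrow> dist (B q) (B p) < e"
    using cb S e unfolding continuous_on_iff B_def by blast
  obtain d3 where d3: "d3 > 0" "ball p d3 \<subseteq> S" using S open_contains_ball by blast
  define d where "d = min d1 (min d2 d3)"
  have d: "d > 0" using d1 d2 d3 by (simp add: d_def)
  define h where "h = d / (2 * (norm a + norm b + 1))"
  have npos: "2 * (norm a + norm b + 1) > 0" using norm_ge_zero[of a] norm_ge_zero[of b] by (smt (verit))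
  have h: "h > 0" using d npos by (simp add: h_def)
  have hd: "h * (norm a + norm b) < d"
  proof -
    have "h * (norm a + norm b) < h * (2 * (norm a + norm b + 1))"
      using norm_ge_zero[of a] norm_ge_zero[of b] h
      by (intro mult_strict_left_mono) (smt (verit), assumption)
    also have "\<dots> = d" using npos by (simp add: h_def)
    finally show ?thesis .
  qed
  have close: "p + s *\<^sub>R a + t *\<^sub>R b \<in> S \<and> dist (p + s *\<^sub>R a + t *\<^sub>R b) p < d"
    if "s \<in> {0..h}" "t \<in> {0..h}" for s t
  proof -
    have "dist (p + s *\<^sub>R a + t *\<^sub>R b) p = norm (s *\<^sub>R a + t *\<^sub>R b)" by (simp add: dist_norm)
    also have "\<dots> \<le> norm (s *\<^sub>R a) + norm (t *\<^sub>R b)" by (rule norm_triangle_ineq)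
    also have "\<dots> = s * norm a + t * norm b" using that by simp
    also have "\<dots> \<le> h * norm a + h * norm b" using that
      by (intro add_mono mult_right_mono) auto
    also have "\<dots> < d" using hd by (simp add: algebra_simps)
    finally have lt: "dist (p + s *\<^sub>R a + t *\<^sub>R b) p < d" .
    then have "p + s *\<^sub>R a + t *\<^sub>R b \<in> ball p d3" by (simp add: d_def dist_commute)
    with d3 lt show ?thesis by blast
  qed
  have close2: "p + s *\<^sub>R b + t *\<^sub>R a \<in> S \<and> dist (p + s *\<^sub>R b + t *\<^sub>R a) p < d"
    if "s \<in> {0..h}" "t \<in> {0..h}" for s t
    using close[OF that(2,1)] by (simp add: add_ac)
  obtain s1 t1 where st1: "0 < s1" "s1 < h" "0 < t1" "t1 < h"
    "f (p + h *\<^sub>R a + h *\<^sub>R b) - f (p + h *\<^sub>R a) - f (p + h *\<^sub>R b) + f p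
        = h * (h * A (p + s1 *\<^sub>R a + t1 *\<^sub>R b))"
    using schwarz_aux[OF S(1) h, of p a b f] close df dga unfolding A_def by blast
  obtain s2 t2 where st2: "0 < s2" "s2 < h" "0 < t2" "t2 < h"
    "f (p + h *\<^sub>R b + h *\<^sub>R a) - f (p + h *\<^sub>R b) - f (p + h *\<^sub>R a) + f p
        = h * (h * B (p + s2 *\<^sub>R b + t2 *\<^sub>R a))"
    using schwarz_aux[OF S(1) h, of p b a f] close2 df dgb unfolding B_def by blast
  have "h * (h * A (p + s1 *\<^sub>R a + t1 *\<^sub>R b)) = h * (h * B (p + s2 *\<^sub>R b + t2 *\<^sub>R a))"
  proof -
    have "p + h *\<^sub>R b + h *\<^sub>R a = p + h *\<^sub>R a + h *\<^sub>R b" by (simp add: add_ac)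
    then show ?thesis using st1(5) st2(5) by (simp only:)
  qed
  then have AB: "A (p + s1 *\<^sub>R a + t1 *\<^sub>R b) = B (p + s2 *\<^sub>R b + t2 *\<^sub>R a)" using h by simp
  have "dist (A (p + s1 *\<^sub>R a + t1 *\<^sub>R b)) (A p) < e"
    using d1(2) close[of s1 t1] st1 by (simp add: d_def)
  moreover have "dist (B (p + s2 *\<^sub>R b + t2 *\<^sub>R a)) (B p) < e"
    using d2(2) close2[of s2 t2] st2 by (simp add: d_def)
  ultimately show False using AB unfolding e_def dist_real_def by (auto simp: abs_if split: if_splits)
qed

lemma sm_schwarz:
  fixes f :: "'a::euclidean_space \<Rightarrow> real"
  assumes "open S" "smooth_on S f" "p \<in> S"
  shows "FD (\<lambda>r. FD f r a) p b = FD (\<lambda>r. FD f r b) p a"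
  by (rule schwarz[OF assms(1,3)],
      (rule sm_diff[OF assms(1)], (rule sm_FD)?, rule assms(2), assumption)+,
      (rule sm_cont, rule sm_FD, rule sm_FD, rule assms(2))+)

lemma sm_sub: "open S \<Longrightarrow> smooth_on S f \<Longrightarrow> smooth_on S g \<Longrightarrow> smooth_on S (\<lambda>x. f x - g x)"
  using sm_add[of S f "\<lambda>x. - g x"] sm_lin[OF bounded_linear_minus[OF bounded_linear_ident], of S g]
  by simp

lemma sm_app:
  fixes f :: "'a::euclidean_space \<Rightarrow> 'b::euclidean_space"
  assumes S: "open S" and f: "smooth_on S f" and Y: "smooth_on S Y"
  shows "smooth_on S (\<lambda>q. FD f q (Y q))"
proof (rule sm_cong[OF S])
  show "smooth_on S (\<lambda>q. \<Sum>e\<in>Basis. (Y q \<bullet> e) *\<^sub>R FD f q e)"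
    by (intro sm_sum S finite_Basis sm_bil[OF bounded_bilinear_scaleR S]
          sm_lin[OF bounded_linear_inner_left S Y] sm_FD f)
  fix x assume "x \<in> S"
  show "(\<Sum>e\<in>Basis. (Y x \<bullet> e) *\<^sub>R FD f x e) = FD f x (Y x)"
    by (rule FD_expand[OF sm_diff[OF S f \<open>x \<in> S\<close>], symmetric])
qed

lemma vf_eta: "vf_apply X f = (\<lambda>p. FD f p (X p))"
  by (rule ext) (simp add: vf_apply_def)

lemma sm_vf:
  fixes f :: "pt \<Rightarrow> 'b::euclidean_space"
  shows "open S \<Longrightarrow> smooth_on S f \<Longrightarrow> smooth_on S X \<Longrightarrow> smooth_on S (vf_apply X f)"
  unfolding vf_eta by (rule sm_app)

lemma lie_eta: "lie X Y = (\<lambda>p. FD Y p (X p) - FD X p (Y p))"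
  by (rule ext) (simp add: lie_def)

lemma sm_lie:
  fixes X :: "pt \<Rightarrow> pt"
  shows "open S \<Longrightarrow> smooth_on S X \<Longrightarrow> smooth_on S Y \<Longrightarrow> smooth_on S (lie X Y)"
  unfolding lie_eta by (intro sm_sub sm_app)

lemma D2_expand:
  fixes f :: "'a::euclidean_space \<Rightarrow> 'b::euclidean_space"
  assumes S: "open S" and f: "smooth_on S f" and p: "p \<in> S"
  shows "FD (\<lambda>r. FD f r u) p c = (\<Sum>e\<in>Basis. (u \<bullet> e) *\<^sub>R FD (\<lambda>r. FD f r e) p c)"
proof -
 have e: "FD (\<lambda>r. FD f r u) p = FD (\<lambda>r. \<Sum>e\<in>Basis. (u \<bullet> e) *\<^sub>R FD f r e) p"
    by (rule FD_local[OF S p], rule FD_expand[OF sm_diff[OF S f]])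
  have "FD (\<lambda>r. FD f r u) p c = FD (\<lambda>r. \<Sum>e\<in>Basis. (u \<bullet> e) *\<^sub>R FD f r e) p c" by (simp only: e)
  also have "\<dots> = (\<Sum>e\<in>Basis. FD (\<lambda>r. (u \<bullet> e) *\<^sub>R FD f r e) p c)"
    by (rule FD_sum, simp, rule diff_lin[OF bounded_linear_scaleR_right], rule sm_diff[OF S sm_FD[OF f] p])
  also have "\<dots> = (\<Sum>e\<in>Basis. (u \<bullet> e) *\<^sub>R FD (\<lambda>r. FD f r e) p c)"
    by (rule sum.cong[OF refl], rule FD_linc[OF bounded_linear_scaleR_right])
       (rule sm_diff[OF S sm_FD[OF f] p])
  finally show ?thesis .
qed

lemma FD_app:
  fixes f :: "'a::euclidean_space \<Rightarrow> 'b::euclidean_space"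
  assumes S: "open S" and f: "smooth_on S f" and Y: "smooth_on S Y" and p: "p \<in> S"
  shows "FD (\<lambda>q. FD f q (Y q)) p c = FD f p (FD Y p c) + FD (\<lambda>r. FD f r (Y p)) p c"
proof -
  have dY: "(\<lambda>q. Y q \<bullet> e) differentiable (at p)" for e
    by (intro diff_lin[OF bounded_linear_inner_left] sm_diff[OF S Y p])
  have dF: "(\<lambda>q. FD f q e) differentiable (at p)" for e
    by (rule sm_diff[OF S sm_FD[OF f] p])
 have e: "FD (\<lambda>q. FD f q (Y q)) p = FD (\<lambda>q. \<Sum>e\<in>Basis. (Y q \<bullet> e) *\<^sub>R FD f q e) p"
    by (rule FD_local[OF S p], rule FD_expand[OF sm_diff[OF S f]])
  have "FD (\<lambda>q. FD f q (Y q)) p c = FD (\<lambda>q. \<Sum>e\<in>Basis. (Y q \<bullet> e) *\<^sub>R FD f q e) p c" by (simp only: e)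
  also have "\<dots> = (\<Sum>e\<in>Basis. FD (\<lambda>q. (Y q \<bullet> e) *\<^sub>R FD f q e) p c)"
    by (rule FD_sum, simp, rule diff_bil[OF bounded_bilinear_scaleR dY dF])
  also have "\<dots> = (\<Sum>e\<in>Basis. (Y p \<bullet> e) *\<^sub>R FD (\<lambda>q. FD f q e) p c + (FD Y p c \<bullet> e) *\<^sub>R FD f p e)"
    apply (rule sum.cong[OF refl])
    apply (subst FD_bil[OF bounded_bilinear_scaleR dY dF])
    apply (subst FD_linc[OF bounded_linear_inner_left sm_diff[OF S Y p]])
    by simp
  also have "\<dots> = (\<Sum>e\<in>Basis. (Y p \<bullet> e) *\<^sub>R FD (\<lambda>q. FD f q e) p c) + (\<Sum>e\<in>Basis. (FD Y p c \<bullet> e) *\<^sub>R FD f p e)"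
    by (rule sum.distrib)
  also have "\<dots> = FD (\<lambda>r. FD f r (Y p)) p c + FD f p (FD Y p c)"
    unfolding D2_expand[OF S f p, of "Y p" c, symmetric] FD_expand[OF sm_diff[OF S f p], of "FD Y p c", symmetric]
    by (rule refl)
  finally show ?thesis by simp
qed

lemma vf_lie:
  fixes f :: "pt \<Rightarrow> real"
  assumes S: "open S" and f: "smooth_on S f" and X: "smooth_on S X" and Y: "smooth_on S Y" and p: "p \<in> S"
  shows "vf_apply (lie X Y) f p = vf_apply X (vf_apply Y f) p - vf_apply Y (vf_apply X f) p"
proof -
  have "vf_apply (lie X Y) f p = FD f p (FD Y p (X p)) - FD f p (FD X p (Y p))"
    unfolding vf_apply_def lie_def using FD_lin[OF sm_diff[OF S f p]] by (simp add: linear_diff)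
  moreover have "vf_apply X (vf_apply Y f) p = FD f p (FD Y p (X p)) + FD (\<lambda>r. FD f r (Y p)) p (X p)"
    unfolding vf_eta by (rule FD_app[OF S f Y p])
  moreover have "vf_apply Y (vf_apply X f) p = FD f p (FD X p (Y p)) + FD (\<lambda>r. FD f r (X p)) p (Y p)"
    unfolding vf_eta by (rule FD_app[OF S f X p])
  moreover have "FD (\<lambda>r. FD f r (Y p)) p (X p) = FD (\<lambda>r. FD f r (X p)) p (Y p)"
    by (rule sm_schwarz[OF S f p])
  ultimately show ?thesis by simp
qed




definition Om' :: "real^3 \<Rightarrow> real^3 \<Rightarrow> pt \<Rightarrow> pt \<Rightarrow> real" where
 "Om' E B a b = -(E \<bullet> snd a * fst b - E \<bullet> snd b * fst a) + B \<bullet> cross3 (snd a) (snd b)"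

lemma Om'_scale: "Om' E B (c *\<^sub>R V) w = c * Om' E B V w"
  by (simp add: Om'_def cross_mult_left algebra_simps)

lemma alg_ham_poly:
  fixes a b v B :: "real^3" and th :: real and w :: pt
  shows "Om' (a + cross3 v B) B ((- (B \<bullet> b)) *\<^sub>R (1, v) + (th + v \<bullet> b) *\<^sub>R (0, B)
           + (0, cross3 a b)) w = (- (B \<bullet> a)) * (fst w * th + snd w \<bullet> b)"
proof -
  obtain w0 w1 where w: "w = (w0, w1)" by fastforce
  show ?thesis
    unfolding w Om'_def
    by (simp add: inner_vec_def sum_3 cross3_def algebra_simps)
qed

lemma alg_ham:
  fixes a b v B :: "real^3" and th :: real and w :: pt
  assumes r: "B \<bullet> a \<noteq> 0"
  shows "Om' (a + cross3 v B) B (inverse (- (B \<bullet> a)) *\<^sub>R ((- (B \<bullet> b)) *\<^sub>R (1, v) + (th + v \<bullet> b) *\<^sub>R (0, B)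
           + (0, cross3 a b))) w = fst w * th + snd w \<bullet> b"
  unfolding Om'_scale alg_ham_poly using r by simp

lemma alg_F1:
  fixes v B :: "real^3" and dv dB :: "3 \<Rightarrow> real^3"
  assumes "dv 1$1 + dv 2$2 + dv 3$3 = 0" "dB 1$1 + dB 2$2 + dB 3$3 = 0"
  shows "vector[(cross3 v (dB 2) + cross3 (dv 2) B)$3 - (cross3 v (dB 3) + cross3 (dv 3) B)$2,
                (cross3 v (dB 3) + cross3 (dv 3) B)$1 - (cross3 v (dB 1) + cross3 (dv 1) B)$3,
                (cross3 v (dB 1) + cross3 (dv 1) B)$2 - (cross3 v (dB 2) + cross3 (dv 2) B)$1]
         + (\<Sum>i\<in>UNIV. v$i *\<^sub>R dB i) = (\<Sum>i\<in>UNIV. B$i *\<^sub>R dv i)"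
proof -
  have a: "dv 3$3 = - dv 1$1 - dv 2$2" "dB 3$3 = - dB 1$1 - dB 2$2" using assms by auto
  show ?thesis
    by (simp add: vec_eq_iff forall_3 sum_3 cross3_def a algebra_simps)
qed

lemma alg_F3:
  fixes a b :: "real^3" and dv :: "3 \<Rightarrow> real^3"
  assumes "dv 1$1 + dv 2$2 + dv 3$3 = 0"
  shows "cross3 a (\<chi> j. - (dv j \<bullet> b)) + cross3 (\<chi> j. - (dv j \<bullet> a)) b
          = (\<Sum>i\<in>UNIV. (cross3 a b)$i *\<^sub>R dv i)"
proof -
  have a: "dv 3$3 = - dv 1$1 - dv 2$2" using assms by auto
  show ?thesis
    by (simp add: vec_eq_iff forall_3 sum_3 cross3_def inner_vec_def a algebra_simps)
qed

lemma closed_alg: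
  fixes Et Bt :: "real^3" and E B :: "3 \<Rightarrow> real^3" and a b c :: pt
  assumes "Bt = vector[E 2$3 - E 3$2, E 3$1 - E 1$3, E 1$2 - E 2$1]" "B 1$1 + B 2$2 + B 3$3 = 0"
  shows "Om' (fst a *\<^sub>R Et + (\<Sum>i\<in>UNIV. snd a $ i *\<^sub>R E i)) (fst a *\<^sub>R Bt + (\<Sum>i\<in>UNIV. snd a $ i *\<^sub>R B i)) b c
       + Om' (fst b *\<^sub>R Et + (\<Sum>i\<in>UNIV. snd b $ i *\<^sub>R E i)) (fst b *\<^sub>R Bt + (\<Sum>i\<in>UNIV. snd b $ i *\<^sub>R B i)) c a
       + Om' (fst c *\<^sub>R Et + (\<Sum>i\<in>UNIV. snd c $ i *\<^sub>R E i)) (fst c *\<^sub>R Bt + (\<Sum>i\<in>UNIV. snd c $ i *\<^sub>R B i)) a b = 0"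
proof -
  have b3: "B 3 $ 3 = - B 1 $ 1 - B 2 $ 2" using assms(2) by simp
  show ?thesis
  unfolding Om'_def assms(1) using b3
  by (simp add: inner_vec_def sum_3 cross3_def algebra_simps b3)
qed




lemma bounded_bilinear_cross3: "bounded_bilinear cross3"
  using bilinear_cross bilinear_conv_bounded_bilinear by blast

lemma FD_pair: "a differentiable (at p) \<Longrightarrow> b differentiable (at p) \<Longrightarrow>
   FD (\<lambda>q. (a q, b q)) p c = (FD a p c, FD b p c)"
proof -
  assume a: "a differentiable (at p)" and b: "b differentiable (at p)"
  show ?thesis using FD_eq[OF has_derivative_Pair[OF FD_hd[OF a] FD_hd[OF b]]] by simp
qed

lemma diff_pair: "a differentiable (at p) \<Longrightarrow> b differentiable (at p) \<Longrightarrow>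
   (\<lambda>q. (a q, b q)) differentiable (at p)"
  using has_derivative_Pair[OF FD_hd FD_hd] differentiable_def by blast

lemma sm_pair:
  assumes S: "open S" and a: "smooth_on S a" and b: "smooth_on S b"
  shows "smooth_on S (\<lambda>q. (a q, b q))"
proof -
  have "smooth_on S (\<lambda>q. (a q, 0) + (0, b q))"
    by (intro sm_add[OF S] sm_lin[OF _ S a] sm_lin[OF _ S b]
        bounded_linear_Pair bounded_linear_ident bounded_linear_zero)
  then show ?thesis by simp
qed

lemma Ck_bl: "bounded_linear L \<Longrightarrow> Ck_on k S L"
proof (induction k)
  case 0 then show ?case by (simp add: linear_continuous_on)
next
  case (Suc k)
  have "L differentiable_on S"
    using bounded_linear_imp_has_derivative[OF Suc.prems] unfolding differentiable_on_def differentiable_def by blast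
  then show ?case by (simp add: FD_bl[OF Suc.prems] Ck_const)
qed

lemma sm_bl: "bounded_linear L \<Longrightarrow> smooth_on S L"
  unfolding smooth_on_def using Ck_bl by blast

lemma vec3_expand: "(x::real^3) = (\<Sum>i\<in>UNIV. x$i *\<^sub>R axis i 1)"
  by (simp add: vec_eq_iff forall_3 sum_3 axis_def)

lemma pt_expand: "(w::pt) = fst w *\<^sub>R (1,0) + (\<Sum>i\<in>UNIV. snd w $ i *\<^sub>R (0, axis i 1))"
  by (simp add: prod_eq_iff vec_eq_iff forall_3 sum_3 axis_def)

lemma dx_eta: "dx i f = (\<lambda>p. FD f p (0, axis i 1))"
  by (rule ext) (simp add: dx_def)

lemma dt_eta: "dt f = (\<lambda>p. FD f p (1, 0))"
  by (rule ext) (simp add: dt_def)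

lemma grad_eq: "grad f = (\<lambda>p. \<Sum>i\<in>UNIV. dx i f p *\<^sub>R axis i 1)"
  by (rule ext) (simp add: grad_def vec_eq_iff forall_3 sum_3 axis_def)

lemma coord:
  assumes "f differentiable (at p)"
  shows "FD f p w = fst w *\<^sub>R dt f p + (\<Sum>i\<in>UNIV. snd w $ i *\<^sub>R dx i f p)"
proof -
  have "FD f p w = FD f p (fst w *\<^sub>R (1,0) + (\<Sum>i\<in>UNIV. snd w $ i *\<^sub>R (0, axis i 1)))"
    using pt_expand[of w] by simp
  also have "\<dots> = fst w *\<^sub>R dt f p + (\<Sum>i\<in>UNIV. snd w $ i *\<^sub>R dx i f p)"
    using FD_lin[OF assms] by (simp only: linear_add linear_sum linear_cmul dt_def dx_def)
  finally show ?thesis .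
qed

lemma coord_real:
  fixes f :: "pt \<Rightarrow> real"
  assumes "f differentiable (at p)"
  shows "FD f p w = fst w * dt f p + snd w \<bullet> grad f p"
  unfolding coord[OF assms] by (simp add: inner_vec_def grad_def)

lemma Omega_Om: "Omega \<phi> v B q a b = Om' (grad \<phi> q + cross3 (v q) (B q)) (B q) a b"
  by (simp add: Omega_def Om'_def Let_def)

lemma Om'_skew: "Om' E B a b = - Om' E B b a"
  by (simp add: Om'_def cross_skew[of "snd a"])

lemma Om'_diff3: "Om' E B (a - a') b = Om' E B a b - Om' E B a' b"
  by (simp add: Om'_def inner_diff_left inner_diff_right cross3_simps)

lemma Om'_zero4: "Om' E B a 0 = 0"
  by (simp add: Om'_def)

lemma FD_Om:
  assumes "E differentiable (at p)" "B differentiable (at p)" "X differentiable (at p)" "Y differentiable (at p)"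
  shows "FD (\<lambda>q. Om' (E q) (B q) (X q) (Y q)) p c =
    Om' (FD E p c) (FD B p c) (X p) (Y p) + Om' (E p) (B p) (FD X p c) (Y p) + Om' (E p) (B p) (X p) (FD Y p c)"
proof -
  note d = FD_hd[OF assms(1)] FD_hd[OF assms(2)] FD_hd[OF assms(3)] FD_hd[OF assms(4)]
  have "((\<lambda>q. Om' (E q) (B q) (X q) (Y q)) has_derivative (\<lambda>c.
    Om' (FD E p c) (FD B p c) (X p) (Y p) + Om' (E p) (B p) (FD X p c) (Y p) + Om' (E p) (B p) (X p) (FD Y p c))) (at p)"
    unfolding Om'_def
    apply (rule has_derivative_eq_rhs)
     apply (rule derivative_intros bounded_bilinear.FDERIV[OF bounded_bilinear_cross3] d)+
    apply (rule ext)
    by (simp add: algebra_simps cross3_simps)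
  then show ?thesis by (simp add: FD_eq)
qed

locale setting =
  fixes D :: "(real^3) set" and v B :: "pt \<Rightarrow> real^3" and \<phi> :: "pt \<Rightarrow> real" and M :: "pt set"
  assumes M_def: "M = UNIV \<times> D"
    and D_open: "open D"
    and v_smooth: "smooth_on M v" and B_smooth: "smooth_on M B" and \<phi>_smooth: "smooth_on M \<phi>"
    and v_div: "\<forall>p\<in>M. divg v p = 0"
    and B_div: "\<forall>p\<in>M. divg B p = 0"
    and B_eq: "\<forall>p\<in>M. dt B p - curl (\<lambda>q. cross3 (v q) (B q)) p = 0"
    and \<phi>_eq: "\<forall>p\<in>M. dt \<phi> p + v p \<bullet> grad \<phi> p = 0"
    and \<rho>_nz: "\<forall>p\<in>M. - (B p \<bullet> grad \<phi> p) \<noteq> 0"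
begin

abbreviation S where "S \<equiv> suspension v"
abbreviation \<rho> where "\<rho> \<equiv> (\<lambda>p. - (B p \<bullet> grad \<phi> p))"
abbreviation EE where "EE \<equiv> (\<lambda>q. grad \<phi> q + cross3 (v q) (B q))"
abbreviation FF where "FF \<equiv> (\<lambda>q. cross3 (v q) (B q))"

lemma oM: "open M" using M_def D_open open_Times by auto

lemma dff: "smooth_on M f \<Longrightarrow> p \<in> M \<Longrightarrow> f differentiable (at p)"
  by (rule sm_diff[OF oM])

lemma sm_dx: "smooth_on M f \<Longrightarrow> smooth_on M (dx i f)"
  unfolding dx_eta by (rule sm_FD)

lemma sm_dt: "smooth_on M f \<Longrightarrow> smooth_on M (dt f)"
  unfolding dt_eta by (rule sm_FD)

lemma sm_grad: "smooth_on M f \<Longrightarrow> smooth_on M (grad f)"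
  unfolding grad_eq
  by (rule sm_sum[OF oM], simp, rule sm_lin[OF bounded_linear_scaleR_left oM], rule sm_dx)

lemma sm_cross: "smooth_on M a \<Longrightarrow> smooth_on M b \<Longrightarrow> smooth_on M (\<lambda>q. cross3 (a q) (b q))"
  by (rule sm_bil[OF bounded_bilinear_cross3 oM])

lemma sm_inner: "smooth_on M a \<Longrightarrow> smooth_on M b \<Longrightarrow> smooth_on M (\<lambda>q. (a q) \<bullet> (b q))"
  by (rule sm_bil[OF bounded_bilinear_inner oM])

lemma sm_S: "smooth_on M S"
  unfolding suspension_def[abs_def] by (rule sm_pair[OF oM sm_const v_smooth])

lemma sm_rho: "smooth_on M \<rho>"
  by (rule sm_lin[OF bounded_linear_minus[OF bounded_linear_ident] oM sm_inner[OF B_smooth sm_grad[OF \<phi>_smooth]]])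

lemma sm_irho: "smooth_on M (\<lambda>p. inverse (\<rho> p))"
  by (rule sm_inv[OF oM sm_rho]) (use \<rho>_nz in auto)

lemma sm_EE: "smooth_on M EE"
  by (rule sm_add[OF oM sm_grad[OF \<phi>_smooth] sm_cross[OF v_smooth B_smooth]])

lemma FD_S: "p \<in> M \<Longrightarrow> FD S p c = (0, FD v p c)"
  unfolding suspension_def[abs_def]
  by (subst FD_pair) (auto simp: FD_const intro: dff v_smooth)

lemma FD_grad:
  assumes f: "smooth_on M f" and p: "p \<in> M"
  shows "FD (grad f) p c = (\<chi> j. FD (dx j f) p c)"
proof -
  have "FD (grad f) p c = (\<Sum>i\<in>UNIV. FD (\<lambda>q. dx i f q *\<^sub>R axis i 1) p c)"
    unfolding grad_eq
    by (rule FD_sum) (auto intro!: diff_lin[OF bounded_linear_scaleR_left] dff[OF sm_dx[OF f] p])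
  also have "\<dots> = (\<Sum>i\<in>UNIV. FD (dx i f) p c *\<^sub>R axis i 1)"
    by (rule sum.cong[OF refl], rule FD_linc[OF bounded_linear_scaleR_left dff[OF sm_dx[OF f] p]])
  also have "\<dots> = (\<chi> j. FD (dx j f) p c)"
    by (simp add: vec_eq_iff forall_3 sum_3 axis_def)
  finally show ?thesis .
qed

lemma conserved_S:
  fixes f :: "pt \<Rightarrow> real"
  assumes f: "smooth_on M f" and q: "q \<in> M"
  shows "FD f q (S q) = dt f q + v q \<bullet> grad f q"
  unfolding coord_real[OF dff[OF f q]] by (simp add: suspension_def)

lemma cons_dx:
  fixes f :: "pt \<Rightarrow> real"
  assumes f: "smooth_on M f" and c: "\<forall>q\<in>M. dt f q + v q \<bullet> grad f q = 0" and p: "p \<in> M"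
  shows "FD (dx j f) p (S p) = - (dx j v p \<bullet> grad f p)"
proof -
  have "FD (\<lambda>q. FD f q (S q)) p = FD (\<lambda>q. 0) p"
    by (rule FD_local[OF oM p]) (use c conserved_S[OF f] in auto)
  then have z: "FD (\<lambda>q. FD f q (S q)) p (0, axis j 1) = 0" by (simp add: FD_const)
  have "FD (\<lambda>q. FD f q (S q)) p (0, axis j 1)
        = FD f p (FD S p (0, axis j 1)) + FD (\<lambda>r. FD f r (S p)) p (0, axis j 1)"
    by (rule FD_app[OF oM f sm_S p])
  also have "FD S p (0, axis j 1) = (0, dx j v p)" by (simp add: FD_S[OF p] dx_def)
  also have "FD f p (0, dx j v p) = dx j v p \<bullet> grad f p"
    by (simp add: coord_real[OF dff[OF f p]])
  also have "FD (\<lambda>r. FD f r (S p)) p (0, axis j 1) = FD (\<lambda>r. FD f r (0, axis j 1)) p (S p)"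
    by (rule sm_schwarz[OF oM f p])
  also have "\<dots> = FD (dx j f) p (S p)" by (simp add: dx_eta)
  finally show ?thesis using z by simp
qed


lemma dv: "p \<in> M \<Longrightarrow> v differentiable (at p)" by (rule dff[OF v_smooth])
lemma dB: "p \<in> M \<Longrightarrow> B differentiable (at p)" by (rule dff[OF B_smooth])

lemma FDv0: "p \<in> M \<Longrightarrow> FD v p (0, z) = (\<Sum>i\<in>UNIV. z $ i *\<^sub>R dx i v p)"
  using coord[OF dv] by simp

lemma divv: "p \<in> M \<Longrightarrow> dx 1 v p $ 1 + dx 2 v p $ 2 + dx 3 v p $ 3 = 0"
  using v_div by (simp add: divg_def sum_3)

lemma divB: "p \<in> M \<Longrightarrow> dx 1 B p $ 1 + dx 2 B p $ 2 + dx 3 B p $ 3 = 0"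
  using B_div by (simp add: divg_def sum_3)

lemma F1: assumes p: "p \<in> M" shows "FD B p (S p) = FD v p (0, B p)"
proof -
  have c1: "FD B p (S p) = dt B p + (\<Sum>i\<in>UNIV. v p $ i *\<^sub>R dx i B p)"
    using coord[OF dB[OF p], of "S p"] by (simp add: suspension_def)
  have dF: "dx i FF p = cross3 (v p) (dx i B p) + cross3 (dx i v p) (B p)" for i
    unfolding dx_def by (rule FD_bil[OF bounded_bilinear_cross3 dv[OF p] dB[OF p]])
  have cu: "dt B p = curl FF p" using B_eq p by simp
  show ?thesis unfolding c1 FDv0[OF p] cu curl_def dF
    using alg_F1[of "\<lambda>i. dx i v p" "\<lambda>i. dx i B p" "v p" "B p"] divv[OF p] divB[OF p] by simp
qed

lemma FD_rho: assumes p: "p \<in> M"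
  shows "FD \<rho> p c = - (B p \<bullet> FD (grad \<phi>) p c + FD B p c \<bullet> grad \<phi> p)"
proof -
  have "FD \<rho> p c = - FD (\<lambda>q. B q \<bullet> grad \<phi> q) p c"
    by (rule FD_linc[OF bounded_linear_minus[OF bounded_linear_ident]])
       (rule diff_bil[OF bounded_bilinear_inner dB[OF p] dff[OF sm_grad[OF \<phi>_smooth] p]])
  also have "\<dots> = - (B p \<bullet> FD (grad \<phi>) p c + FD B p c \<bullet> grad \<phi> p)"
    by (subst FD_bil[OF bounded_bilinear_inner dB[OF p] dff[OF sm_grad[OF \<phi>_smooth] p]]) simp
  finally show ?thesis .
qed

lemma grad_S:
  assumes f: "smooth_on M f" and c: "\<forall>q\<in>M. dt f q + v q \<bullet> grad f q = 0" and p: "p \<in> M"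
  shows "FD (grad f) p (S p) = (\<chi> j. - (dx j v p \<bullet> grad f p))"
  unfolding FD_grad[OF f p] cons_dx[OF f c p] ..

lemma F2: assumes p: "p \<in> M" shows "FD \<rho> p (S p) = 0"
  unfolding FD_rho[OF p] grad_S[OF \<phi>_smooth \<phi>_eq p] F1[OF p] FDv0[OF p]
  by (simp add: inner_vec_def sum_3 algebra_simps)

lemma F3:
  assumes h: "smooth_on M h" and c: "\<forall>q\<in>M. dt h q + v q \<bullet> grad h q = 0" and p: "p \<in> M"
  shows "FD (\<lambda>q. cross3 (grad \<phi> q) (grad h q)) p (S p) = FD v p (0, cross3 (grad \<phi> p) (grad h p))"
proof -
  have "FD (\<lambda>q. cross3 (grad \<phi> q) (grad h q)) p (S p) =
     cross3 (grad \<phi> p) (FD (grad h) p (S p)) + cross3 (FD (grad \<phi>) p (S p)) (grad h p)"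
    by (rule FD_bil[OF bounded_bilinear_cross3 dff[OF sm_grad[OF \<phi>_smooth] p] dff[OF sm_grad[OF h] p]])
  then show ?thesis
    unfolding grad_S[OF \<phi>_smooth \<phi>_eq p] grad_S[OF h c p] FDv0[OF p]
    using alg_F3[of "\<lambda>i. dx i v p" "grad \<phi> p" "grad h p"] divv[OF p] by simp
qed

lemma frozen:
  assumes Z: "smooth_on M Z" and r: "smooth_on M r" and rnz: "\<forall>q\<in>M. r q \<noteq> 0" and p: "p \<in> M"
    and hr: "FD r p (S p) = 0" and hZ: "FD Z p (S p) = FD v p (0, Z p)"
  shows "lie S (\<lambda>q. (0::real, inverse (r q) *\<^sub>R Z q)) p = 0"
proof -
  have di: "(\<lambda>q. inverse (r q)) differentiable (at p)"
    using diff_inv[OF dff[OF r p]] rnz p by blast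
  have dZ: "Z differentiable (at p)" by (rule dff[OF Z p])
  have dp: "(\<lambda>q. inverse (r q) *\<^sub>R Z q) differentiable (at p)"
    by (rule diff_bil[OF bounded_bilinear_scaleR di dZ])
  have i0: "FD (\<lambda>q. inverse (r q)) p (S p) = 0"
    using FD_inv[OF dff[OF r p]] rnz p hr by simp
  have e1: "FD (\<lambda>q. (0::real, inverse (r q) *\<^sub>R Z q)) p (S p) = (0, inverse (r p) *\<^sub>R FD Z p (S p))"
    by (subst FD_pair[OF _ dp]) (simp_all add: FD_const FD_bil[OF bounded_bilinear_scaleR di dZ] i0)
  have e2: "FD S p (0, inverse (r p) *\<^sub>R Z p) = (0, inverse (r p) *\<^sub>R FD v p (0, Z p))"
  proof -
    have "(0::real, inverse (r p) *\<^sub>R Z p) = inverse (r p) *\<^sub>R (0, Z p)" by simp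
    then have "FD v p (0, inverse (r p) *\<^sub>R Z p) = inverse (r p) *\<^sub>R FD v p (0, Z p)"
      using linear_cmul[OF FD_lin[OF dv[OF p]]] by metis
    then show ?thesis using FD_S[OF p] by simp
  qed
  show ?thesis unfolding lie_def e1 e2 hZ by simp
qed

lemma W0_sym: "inf_symmetry M v (\<lambda>p. (0, inverse (\<rho> p) *\<^sub>R B p))"
  unfolding inf_symmetry_def
proof
  fix p assume p: "p \<in> M"
  have "lie S (\<lambda>q. (0::real, inverse (\<rho> q) *\<^sub>R B q)) p = 0"
    by (rule frozen[OF B_smooth sm_rho _ p F2[OF p] F1[OF p]]) (use \<rho>_nz in auto)
  then show "lie S (\<lambda>p. (0, inverse (\<rho> p) *\<^sub>R B p)) p =
        vf_apply S (\<lambda>q. fst (0::real, inverse (\<rho> q) *\<^sub>R B q)) p *\<^sub>R S p"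
    by (simp add: vf_apply_def FD_const)
qed


lemma W0_ham: "hamiltonian_with M (Omega \<phi> v B) (\<lambda>p. (0, inverse (\<rho> p) *\<^sub>R B p)) fst"
  unfolding hamiltonian_with_def
proof (intro ballI allI)
  fix p w assume p: "p \<in> M"
  have r: "B p \<bullet> grad \<phi> p \<noteq> 0" using \<rho>_nz p by auto
  have "FD fst p w = fst w" by (simp add: FD_bl[OF bounded_linear_fst])
  moreover have "Omega \<phi> v B p (0, inverse (\<rho> p) *\<^sub>R B p) w = fst w"
    unfolding Omega_Om Om'_def using r
    by (simp add: inner_add_left dot_cross_self cross_mult_left inner_commute[of "grad \<phi> p"] field_simps)
  ultimately show "Omega \<phi> v B p (0, inverse (\<rho> p) *\<^sub>R B p) w = FD fst p w" by simp
qed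

lemma U_ham:
  assumes h: "smooth_on M h"
  shows "hamiltonian_with M (Omega \<phi> v B) (U_field \<phi> v B h) h"
  unfolding hamiltonian_with_def
proof (intro ballI allI)
  fix p w assume p: "p \<in> M"
  have r: "B p \<bullet> grad \<phi> p \<noteq> 0" using \<rho>_nz p by auto
  show "Omega \<phi> v B p (U_field \<phi> v B h p) w = FD h p w"
    unfolding Omega_Om U_field_def Let_def suspension_def coord_real[OF dff[OF h p]]
    by (rule alg_ham[OF r])
qed

lemma sm_U:
  assumes h: "smooth_on M h"
  shows "smooth_on M (U_field \<phi> v B h)"
proof -
  have U: "U_field \<phi> v B h = (\<lambda>p. inverse (\<rho> p) *\<^sub>R ((- (B p \<bullet> grad h p)) *\<^sub>R S p
      + (dt h p + v p \<bullet> grad h p) *\<^sub>R (0, B p) + (0, cross3 (grad \<phi> p) (grad h p))))"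
    by (rule ext) (simp add: U_field_def Let_def)
  show ?thesis unfolding U
    by (intro sm_bil[OF bounded_bilinear_scaleR oM] sm_irho sm_add[OF oM] sm_lin[OF bounded_linear_minus[OF bounded_linear_ident] oM]
        sm_inner B_smooth sm_grad h sm_S sm_dt v_smooth sm_pair[OF oM] sm_const sm_cross \<phi>_smooth)
qed

lemma U_sym:
  assumes h: "smooth_on M h" and c: "\<forall>q\<in>M. dt h q + v q \<bullet> grad h q = 0"
  shows "inf_symmetry M v (U_field \<phi> v B h)"
  unfolding inf_symmetry_def
proof
  fix p assume p: "p \<in> M"
  define f where "f q = inverse (\<rho> q) * (- (B q \<bullet> grad h q))" for q
  define N where "N q = cross3 (grad \<phi> q) (grad h q)" for q
  define Y where "Y q = (0::real, inverse (\<rho> q) *\<^sub>R N q)" for q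
  define U' where "U' q = f q *\<^sub>R S q + Y q" for q
  have sf: "smooth_on M f" unfolding f_def
    by (intro sm_bil[OF bounded_bilinear_mult oM] sm_irho sm_lin[OF bounded_linear_minus[OF bounded_linear_ident] oM]
        sm_inner B_smooth sm_grad h)
  have sN: "smooth_on M N" unfolding N_def by (intro sm_cross sm_grad h \<phi>_smooth)
  have sY: "smooth_on M Y" unfolding Y_def
    by (intro sm_pair[OF oM] sm_const sm_bil[OF bounded_bilinear_scaleR oM] sm_irho sN)
  have UU: "U_field \<phi> v B h q = U' q" if "q \<in> M" for q
    using c that unfolding U'_def Y_def N_def f_def
    by (simp add: U_field_def Let_def suspension_def algebra_simps)
  have fU: "fst (U_field \<phi> v B h q) = f q" if "q \<in> M" for q
    using UU[OF that] unfolding U'_def Y_def by (simp add: suspension_def)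
  have lieY: "lie S Y p = 0" unfolding Y_def N_def
    by (rule frozen[OF sN[unfolded N_def] sm_rho _ p F2[OF p] F3[OF h c p]]) (use \<rho>_nz in auto)
  have dS: "S differentiable (at p)" by (rule dff[OF sm_S p])
  have dY: "Y differentiable (at p)" by (rule dff[OF sY p])
  have df: "f differentiable (at p)" by (rule dff[OF sf p])
  have e1: "FD (U_field \<phi> v B h) p = FD U' p" by (rule FD_local[OF oM p UU])
  have e2: "FD U' p (S p) = f p *\<^sub>R FD S p (S p) + FD f p (S p) *\<^sub>R S p + FD Y p (S p)"
    unfolding U'_def
    by (simp add: FD_add[OF diff_bil[OF bounded_bilinear_scaleR df dS] dY] FD_bil[OF bounded_bilinear_scaleR df dS])
  have e3: "FD S p (U' p) = f p *\<^sub>R FD S p (S p) + FD S p (Y p)"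
    unfolding U'_def using FD_lin[OF dS] by (simp add: linear_add linear_cmul)
  have e4: "FD (\<lambda>q. fst (U_field \<phi> v B h q)) p = FD f p" by (rule FD_local[OF oM p fU])
  have "lie S (U_field \<phi> v B h) p = FD f p (S p) *\<^sub>R S p + lie S Y p"
    unfolding lie_def e1 UU[OF p] e2 e3 by simp
  then show "lie S (U_field \<phi> v B h) p = vf_apply S (\<lambda>q. fst (U_field \<phi> v B h q)) p *\<^sub>R S p"
    unfolding vf_apply_def e4 lieY by simp
qed


lemma Om'_zero3: "Om' E0 B0 0 b = 0"
  by (simp add: Om'_def)

lemma DOmX:
  assumes X: "X differentiable (at p)" and p: "p \<in> M"
  shows "FD (\<lambda>q. Omega \<phi> v B q (X q) b) p c = Om' (FD EE p c) (FD B p c) (X p) b + Omega \<phi> v B p (FD X p c) b"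
proof -
  have "FD (\<lambda>q. Omega \<phi> v B q (X q) b) p c = FD (\<lambda>q. Om' (EE q) (B q) (X q) b) p c"
    unfolding Omega_Om ..
  also have "\<dots> = Om' (FD EE p c) (FD B p c) (X p) b + Om' (EE p) (B p) (FD X p c) b"
    by (subst FD_Om[OF dff[OF sm_EE p] dB[OF p] X]) (simp_all add: FD_const Om'_zero4)
  finally show ?thesis unfolding Omega_Om .
qed

lemma DOm:
  assumes p: "p \<in> M"
  shows "FD (\<lambda>q. Omega \<phi> v B q a b) p c = Om' (FD EE p c) (FD B p c) a b"
  using DOmX[of "\<lambda>q. a" p b c] p by (simp add: FD_const Omega_Om Om'_zero3)

lemma closed_T:
  assumes p: "p \<in> M"
  shows "Om' (FD EE p a) (FD B p a) b c + Om' (FD EE p b) (FD B p b) c a + Om' (FD EE p c) (FD B p c) a b = 0"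
proof -
  have dE: "EE differentiable (at p)" by (rule dff[OF sm_EE p])
  have dG: "grad \<phi> differentiable (at p)" by (rule dff[OF sm_grad[OF \<phi>_smooth] p])
  have dF: "FF differentiable (at p)" by (rule dff[OF sm_cross[OF v_smooth B_smooth] p])
  have G: "dx i EE p $ j = FD (dx j \<phi>) p (0, axis i 1) + dx i FF p $ j" for i j
  proof -
    have "dx i EE p = FD (grad \<phi>) p (0, axis i 1) + dx i FF p"
      unfolding dx_def by (rule FD_add[OF dG dF])
    then show ?thesis by (simp add: FD_grad[OF \<phi>_smooth p])
  qed
  have sy: "FD (dx j \<phi>) p (0, axis i 1) = FD (dx i \<phi>) p (0, axis j 1)" for i j
    unfolding dx_eta by (rule sm_schwarz[OF oM \<phi>_smooth p])
  have cu: "dt B p = vector [dx 2 EE p $ 3 - dx 3 EE p $ 2, dx 3 EE p $ 1 - dx 1 EE p $ 3, dx 1 EE p $ 2 - dx 2 EE p $ 1]"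
    using B_eq p unfolding G curl_def by (simp add: sy[of 2 3] sy[of 3 1] sy[of 1 2])
  show ?thesis
    unfolding coord[OF dE] coord[OF dB[OF p]]
    by (rule closed_alg[where Et="dt EE p" and Bt="dt B p" and E="\<lambda>i. dx i EE p" and B="\<lambda>i. dx i B p", OF cu divB[OF p]])
qed

lemma ham_closed:
  assumes X: "smooth_on M X" and f: "smooth_on M f" and H: "hamiltonian_with M (Omega \<phi> v B) X f" and p: "p \<in> M"
  shows "lie_deriv2 X (Omega \<phi> v B) p u w = 0"
proof -
  have i: "Om' (FD EE p c) (FD B p c) (X p) w' + Omega \<phi> v B p (FD X p c) w' = FD (\<lambda>q. FD f q w') p c" for c w'
  proof -
    have "FD (\<lambda>q. Omega \<phi> v B q (X q) w') p = FD (\<lambda>q. FD f q w') p"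
      by (rule FD_local[OF oM p]) (use H in \<open>unfold hamiltonian_with_def, blast\<close>)
    then show ?thesis using DOmX[OF dff[OF X p] p, of w' c] by simp
  qed
  have sk: "Omega \<phi> v B p a b = - Omega \<phi> v B p b a" for a b
    unfolding Omega_Om by (rule Om'_skew)
  have sch: "FD (\<lambda>q. FD f q w) p u = FD (\<lambda>q. FD f q u) p w" by (rule sm_schwarz[OF oM f p])
  have T: "Om' (FD EE p (X p)) (FD B p (X p)) u w + Om' (FD EE p u) (FD B p u) w (X p)
      + Om' (FD EE p w) (FD B p w) (X p) u = 0" by (rule closed_T[OF p])
  have sk2: "Om' (FD EE p u) (FD B p u) w (X p) = - Om' (FD EE p u) (FD B p u) (X p) w"
    by (rule Om'_skew)
  show ?thesis
    unfolding lie_deriv2_def DOm[OF p] sk[of u "FD X p w"]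
    using i[of u w] i[of w u] sch T sk2 by (simp add: algebra_simps)
qed

lemma ham_lie:
  assumes X: "smooth_on M X" and Y: "smooth_on M Y" and f: "smooth_on M f" and g: "smooth_on M g"
    and HX: "hamiltonian_with M (Omega \<phi> v B) X f" and HY: "hamiltonian_with M (Omega \<phi> v B) Y g"
  shows "hamiltonian_with M (Omega \<phi> v B) (lie X Y) (vf_apply X g)"
  unfolding hamiltonian_with_def
proof (intro ballI allI)
  fix p w assume p: "p \<in> M"
  have a: "Om' (FD EE p (X p)) (FD B p (X p)) (Y p) w + Omega \<phi> v B p (FD Y p (X p)) w
       = FD (\<lambda>q. FD g q w) p (X p)"
  proof -
    have "FD (\<lambda>q. Omega \<phi> v B q (Y q) w) p = FD (\<lambda>q. FD g q w) p"
      by (rule FD_local[OF oM p]) (use HY in \<open>unfold hamiltonian_with_def, blast\<close>)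
    then show ?thesis using DOmX[OF dff[OF Y p] p, of w "X p"] by simp
  qed
  have b: "Om' (FD EE p (X p)) (FD B p (X p)) (Y p) w + Omega \<phi> v B p (FD X p (Y p)) w
       + Omega \<phi> v B p (Y p) (FD X p w) = 0"
    using ham_closed[OF X f HX p, of "Y p" w] unfolding lie_deriv2_def DOm[OF p] .
  have c: "Omega \<phi> v B p (Y p) (FD X p w) = FD g p (FD X p w)"
    using HY p unfolding hamiltonian_with_def by blast
  have d: "FD (vf_apply X g) p w = FD g p (FD X p w) + FD (\<lambda>r. FD g r (X p)) p w"
    unfolding vf_eta by (rule FD_app[OF oM g X p])
  have e: "FD (\<lambda>q. FD g q w) p (X p) = FD (\<lambda>r. FD g r (X p)) p w" by (rule sm_schwarz[OF oM g p])
  have l: "Omega \<phi> v B p (lie X Y p) w = Omega \<phi> v B p (FD Y p (X p)) w - Omega \<phi> v B p (FD X p (Y p)) w"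
    unfolding lie_def Omega_Om by (rule Om'_diff3)
  show "Omega \<phi> v B p (lie X Y p) w = FD (vf_apply X g) p w"
    unfolding l d using a b c e by (simp add: algebra_simps)
qed


lemma vf_loc: "(\<And>q. q \<in> M \<Longrightarrow> g1 q = g2 q) \<Longrightarrow> p \<in> M \<Longrightarrow> vf_apply Z g1 p = vf_apply Z g2 p"
  unfolding vf_apply_def using FD_local[OF oM, of p g1 g2] by simp

lemma vf_addr: "smooth_on M g1 \<Longrightarrow> smooth_on M g2 \<Longrightarrow> p \<in> M \<Longrightarrow>
   vf_apply Z (\<lambda>q. g1 q + g2 q) p = vf_apply Z g1 p + vf_apply Z g2 p"
  unfolding vf_apply_def by (rule FD_add; rule dff)

lemma vf_diffr: "smooth_on M g1 \<Longrightarrow> smooth_on M g2 \<Longrightarrow> p \<in> M \<Longrightarrow>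
   vf_apply Z (\<lambda>q. g1 q - g2 q) p = vf_apply Z g1 p - vf_apply Z g2 p"
  unfolding vf_apply_def by (rule FD_diff; rule dff)

lemma vf_mult: "smooth_on M g1 \<Longrightarrow> smooth_on M g2 \<Longrightarrow> p \<in> M \<Longrightarrow>
   vf_apply Z (\<lambda>q. g1 q * g2 q :: real) p = g1 p * vf_apply Z g2 p + vf_apply Z g1 p * g2 p"
  unfolding vf_apply_def by (rule FD_bil[OF bounded_bilinear_mult]; rule dff)

lemma vf_bl: "bounded_linear L \<Longrightarrow> vf_apply Z L q = L (Z q)"
  by (simp add: vf_apply_def FD_bl)

lemma KD:
  fixes g :: "pt \<Rightarrow> real"
  assumes Z: "smooth_on M Z" and g: "smooth_on M g" and SZ: "\<forall>p\<in>M. lie S Z p = k p *\<^sub>R S p" and p: "p \<in> M"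
  shows "vf_apply S (vf_apply Z g) p = vf_apply Z (vf_apply S g) p + k p * vf_apply S g p"
proof -
  have "vf_apply (lie S Z) g p = vf_apply S (vf_apply Z g) p - vf_apply Z (vf_apply S g) p"
    by (rule vf_lie[OF oM g sm_S Z p])
  moreover have "vf_apply (lie S Z) g p = k p * vf_apply S g p"
    unfolding vf_apply_def using SZ p linear_cmul[OF FD_lin[OF dff[OF g p]]] by simp
  ultimately show ?thesis by simp
qed

lemma sym_lie:
  assumes X: "smooth_on M X" and Y: "smooth_on M Y"
    and SX: "inf_symmetry M v X" and SY: "inf_symmetry M v Y"
  shows "inf_symmetry M v (lie X Y)"
proof -
  define xi where "xi = (\<lambda>q. fst (X q))"
  define eta where "eta = (\<lambda>q. fst (Y q))"
  define a where "a = vf_apply S xi"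
  define b where "b = vf_apply S eta"
  define L where "L = lie X Y"
  have sxi: "smooth_on M xi" unfolding xi_def by (rule sm_lin[OF bounded_linear_fst oM X])
  have seta: "smooth_on M eta" unfolding eta_def by (rule sm_lin[OF bounded_linear_fst oM Y])
  have sa: "smooth_on M a" unfolding a_def by (rule sm_vf[OF oM sxi sm_S])
  have sb: "smooth_on M b" unfolding b_def by (rule sm_vf[OF oM seta sm_S])
  have sL: "smooth_on M L" unfolding L_def by (rule sm_lie[OF oM X Y])
  have SX': "\<forall>p\<in>M. lie S X p = a p *\<^sub>R S p" using SX unfolding inf_symmetry_def a_def xi_def .
  have SY': "\<forall>p\<in>M. lie S Y p = b p *\<^sub>R S p" using SY unfolding inf_symmetry_def b_def eta_def .
  note vfs = sm_vf[OF oM _ X] sm_vf[OF oM _ Y] sm_vf[OF oM _ sm_S]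
  have step: "vf_apply S (vf_apply L c) p = vf_apply X (vf_apply Y (vf_apply S c)) p
      - vf_apply Y (vf_apply X (vf_apply S c)) p + (vf_apply X b p - vf_apply Y a p) * vf_apply S c p"
    if c: "smooth_on M c" and p: "p \<in> M" for c :: "pt \<Rightarrow> real" and p
  proof -
    have cS: "smooth_on M (vf_apply S c)" by (rule vfs(3)[OF c])
    have e1: "vf_apply S (vf_apply L c) p = vf_apply S (vf_apply X (vf_apply Y c)) p - vf_apply S (vf_apply Y (vf_apply X c)) p"
    proof -
      have "vf_apply S (vf_apply L c) p = vf_apply S (\<lambda>q. vf_apply X (vf_apply Y c) q - vf_apply Y (vf_apply X c) q) p"
        by (rule vf_loc[OF _ p]) (simp add: L_def vf_lie[OF oM c X Y])
      also have "\<dots> = vf_apply S (vf_apply X (vf_apply Y c)) p - vf_apply S (vf_apply Y (vf_apply X c)) p"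
        by (rule vf_diffr[OF vfs(1)[OF vfs(2)[OF c]] vfs(2)[OF vfs(1)[OF c]] p])
      finally show ?thesis .
    qed
    have e2: "vf_apply S (vf_apply X (vf_apply Y c)) p = vf_apply X (vf_apply Y (vf_apply S c)) p
        + (b p * vf_apply X (vf_apply S c) p + vf_apply X b p * vf_apply S c p) + a p * (vf_apply Y (vf_apply S c) p + b p * vf_apply S c p)"
    proof -
      have "vf_apply S (vf_apply X (vf_apply Y c)) p = vf_apply X (vf_apply S (vf_apply Y c)) p + a p * vf_apply S (vf_apply Y c) p"
        by (rule KD[OF X vfs(2)[OF c] SX' p])
      also have "vf_apply X (vf_apply S (vf_apply Y c)) p = vf_apply X (\<lambda>q. vf_apply Y (vf_apply S c) q + b q * vf_apply S c q) p"
        by (rule vf_loc[OF _ p], rule KD[OF Y c SY'])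
      also have "\<dots> = vf_apply X (vf_apply Y (vf_apply S c)) p + (b p * vf_apply X (vf_apply S c) p + vf_apply X b p * vf_apply S c p)"
        by (simp add: vf_addr[OF vfs(2)[OF cS] sm_bil[OF bounded_bilinear_mult oM sb cS] p] vf_mult[OF sb cS p])
      also have "vf_apply S (vf_apply Y c) p = vf_apply Y (vf_apply S c) p + b p * vf_apply S c p"
        by (rule KD[OF Y c SY' p])
      finally show ?thesis .
    qed
    have e3: "vf_apply S (vf_apply Y (vf_apply X c)) p = vf_apply Y (vf_apply X (vf_apply S c)) p
        + (a p * vf_apply Y (vf_apply S c) p + vf_apply Y a p * vf_apply S c p) + b p * (vf_apply X (vf_apply S c) p + a p * vf_apply S c p)"
    proof -
      have "vf_apply S (vf_apply Y (vf_apply X c)) p = vf_apply Y (vf_apply S (vf_apply X c)) p + b p * vf_apply S (vf_apply X c) p"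
        by (rule KD[OF Y vfs(1)[OF c] SY' p])
      also have "vf_apply Y (vf_apply S (vf_apply X c)) p = vf_apply Y (\<lambda>q. vf_apply X (vf_apply S c) q + a q * vf_apply S c q) p"
        by (rule vf_loc[OF _ p], rule KD[OF X c SX'])
      also have "\<dots> = vf_apply Y (vf_apply X (vf_apply S c)) p + (a p * vf_apply Y (vf_apply S c) p + vf_apply Y a p * vf_apply S c p)"
        by (simp add: vf_addr[OF vfs(1)[OF cS] sm_bil[OF bounded_bilinear_mult oM sa cS] p] vf_mult[OF sa cS p])
      also have "vf_apply S (vf_apply X c) p = vf_apply X (vf_apply S c) p + a p * vf_apply S c p"
        by (rule KD[OF X c SX' p])
      finally show ?thesis .
    qed
    show ?thesis unfolding e1 e2 e3 by (simp add: algebra_simps)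
  qed
  show ?thesis
    unfolding inf_symmetry_def L_def[symmetric]
  proof
    fix p assume p: "p \<in> M"
    have vlin: "vf_apply Z (\<lambda>q. q \<bullet> e) q = Z q \<bullet> e" for Z :: "pt \<Rightarrow> pt" and e q
      by (rule vf_bl[OF bounded_linear_inner_left])
    have sc: "smooth_on M (\<lambda>q. q \<bullet> e)" for e :: pt
      by (rule sm_bl[OF bounded_linear_inner_left])
    have k: "vf_apply S (\<lambda>q. fst (L q)) p = vf_apply X b p - vf_apply Y a p"
    proof -
      have fe: "vf_apply Y fst = eta" "vf_apply X fst = xi"
        by (rule ext, simp add: vf_bl[OF bounded_linear_fst] eta_def xi_def)+
      have "vf_apply S (\<lambda>q. fst (L q)) p = vf_apply S (\<lambda>q. vf_apply X eta q - vf_apply Y xi q) p"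
        apply (rule vf_loc[OF _ p])
        using vf_lie[OF oM sm_bl[OF bounded_linear_fst] X Y]
        by (simp add: L_def fe vf_bl[OF bounded_linear_fst])
      also have "\<dots> = vf_apply S (vf_apply X eta) p - vf_apply S (vf_apply Y xi) p"
        by (rule vf_diffr[OF vfs(1)[OF seta] vfs(2)[OF sxi] p])
      also have "\<dots> = vf_apply X b p - vf_apply Y a p"
        unfolding KD[OF X seta SX' p] KD[OF Y sxi SY' p] a_def[symmetric] b_def[symmetric] by simp
      finally show ?thesis .
    qed
    have "lie S L p \<bullet> e = (vf_apply S (\<lambda>q. fst (L q)) p *\<^sub>R S p) \<bullet> e" for e
    proof -
      have "lie S L p \<bullet> e = vf_apply (lie S L) (\<lambda>q. q \<bullet> e) p" by (simp add: vlin)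
      also have "\<dots> = vf_apply S (vf_apply L (\<lambda>q. q \<bullet> e)) p - vf_apply L (vf_apply S (\<lambda>q. q \<bullet> e)) p"
        by (rule vf_lie[OF oM sc sm_S sL p])
      also have "vf_apply L (vf_apply S (\<lambda>q. q \<bullet> e)) p = vf_apply X (vf_apply Y (vf_apply S (\<lambda>q. q \<bullet> e))) p
           - vf_apply Y (vf_apply X (vf_apply S (\<lambda>q. q \<bullet> e))) p"
        unfolding L_def by (rule vf_lie[OF oM vfs(3)[OF sc] X Y p])
      also note step[OF sc p]
      finally show ?thesis
        using ext[of "vf_apply S (\<lambda>q. q \<bullet> e)" "\<lambda>q. S q \<bullet> e", OF vlin] by (simp add: k vlin)
    qed
    then show "lie S L p = vf_apply S (\<lambda>q. fst (L q)) p *\<^sub>R S p"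
      by (simp add: euclidean_eq_iff[where 'a=pt])
  qed
qed


lemma sm_W0: "smooth_on M (\<lambda>p. (0::real, inverse (\<rho> p) *\<^sub>R B p))"
  by (rule sm_pair[OF oM sm_const sm_bil[OF bounded_bilinear_scaleR oM sm_irho B_smooth]])

lemma W_all:
  assumes h: "smooth_on M h" and c: "\<forall>q\<in>M. dt h q + v q \<bullet> grad h q = 0"
  shows "smooth_on M (W_seq (\<lambda>p. (0, inverse (\<rho> p) *\<^sub>R B p)) (U_field \<phi> v B h) n)
    \<and> (\<exists>g. smooth_on M g \<and> hamiltonian_with M (Omega \<phi> v B) (W_seq (\<lambda>p. (0, inverse (\<rho> p) *\<^sub>R B p)) (U_field \<phi> v B h) n) g)
    \<and> inf_symmetry M v (W_seq (\<lambda>p. (0, inverse (\<rho> p) *\<^sub>R B p)) (U_field \<phi> v B h) n)"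
proof (induction n)
  case 0
  show ?case using sm_W0 W0_ham W0_sym sm_bl[OF bounded_linear_fst] by auto
next
  case (Suc n)
  let ?W = "W_seq (\<lambda>p. (0, inverse (\<rho> p) *\<^sub>R B p)) (U_field \<phi> v B h) n"
  from Suc obtain g where sW: "smooth_on M ?W" and g: "smooth_on M g"
    and H: "hamiltonian_with M (Omega \<phi> v B) ?W g" and SW: "inf_symmetry M v ?W" by blast
  have "smooth_on M (lie ?W (U_field \<phi> v B h))" by (rule sm_lie[OF oM sW sm_U[OF h]])
  moreover have "smooth_on M (vf_apply ?W h) \<and> hamiltonian_with M (Omega \<phi> v B) (lie ?W (U_field \<phi> v B h)) (vf_apply ?W h)"
    using sm_vf[OF oM h sW] ham_lie[OF sW sm_U[OF h] g h H U_ham[OF h]] by blast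
  moreover have "inf_symmetry M v (lie ?W (U_field \<phi> v B h))"
    by (rule sym_lie[OF sW sm_U[OF h] SW U_sym[OF h c]])
  ultimately show ?case by auto
qed

lemma main:
  shows "(\<forall>h. smooth_on M h \<longrightarrow> hamiltonian_with M (Omega \<phi> v B) (U_field \<phi> v B h) h)
     \<and> hamiltonian_with M (Omega \<phi> v B) (\<lambda>p. (0, inverse (\<rho> p) *\<^sub>R B p)) fst
     \<and> inf_symmetry M v (\<lambda>p. (0, inverse (\<rho> p) *\<^sub>R B p))
     \<and> (\<forall>h. smooth_on M h \<longrightarrow> (\<forall>p\<in>M. dt h p + v p \<bullet> grad h p = 0) \<longrightarrow>
          inf_symmetry M v (U_field \<phi> v B h)
          \<and> (\<forall>n. hamiltonian_vf M (Omega \<phi> v B) (W_seq (\<lambda>p. (0, inverse (\<rho> p) *\<^sub>R B p)) (U_field \<phi> v B h) n)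
                 \<and> (\<forall>p\<in>M. \<forall>x y. lie_deriv2 (W_seq (\<lambda>p. (0, inverse (\<rho> p) *\<^sub>R B p)) (U_field \<phi> v B h) n) (Omega \<phi> v B) p x y = 0)
                 \<and> inf_symmetry M v (W_seq (\<lambda>p. (0, inverse (\<rho> p) *\<^sub>R B p)) (U_field \<phi> v B h) n)))"
proof (intro conjI allI impI)
  fix h :: "pt \<Rightarrow> real" assume "smooth_on M h" then show "hamiltonian_with M (Omega \<phi> v B) (U_field \<phi> v B h) h" by (rule U_ham)
next
  show "hamiltonian_with M (Omega \<phi> v B) (\<lambda>p. (0, inverse (\<rho> p) *\<^sub>R B p)) fst" by (rule W0_ham)
next
  show "inf_symmetry M v (\<lambda>p. (0, inverse (\<rho> p) *\<^sub>R B p))" by (rule W0_sym)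
next
  fix h :: "pt \<Rightarrow> real" assume h: "smooth_on M h" and c: "\<forall>p\<in>M. dt h p + v p \<bullet> grad h p = 0"
  show "inf_symmetry M v (U_field \<phi> v B h)" by (rule U_sym[OF h c])
  fix n
  from W_all[OF h c, of n] obtain g where sW: "smooth_on M (W_seq (\<lambda>p. (0, inverse (\<rho> p) *\<^sub>R B p)) (U_field \<phi> v B h) n)"
    and g: "smooth_on M g" and H: "hamiltonian_with M (Omega \<phi> v B) (W_seq (\<lambda>p. (0, inverse (\<rho> p) *\<^sub>R B p)) (U_field \<phi> v B h) n) g"
    and SW: "inf_symmetry M v (W_seq (\<lambda>p. (0, inverse (\<rho> p) *\<^sub>R B p)) (U_field \<phi> v B h) n)" by blast
  show "hamiltonian_vf M (Omega \<phi> v B) (W_seq (\<lambda>p. (0, inverse (\<rho> p) *\<^sub>R B p)) (U_field \<phi> v B h) n)"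
    unfolding hamiltonian_vf_def using g H by blast
  show "\<forall>p\<in>M. \<forall>x y. lie_deriv2 (W_seq (\<lambda>p. (0, inverse (\<rho> p) *\<^sub>R B p)) (U_field \<phi> v B h) n) (Omega \<phi> v B) p x y = 0"
    using ham_closed[OF sW g H] by blast
  show "inf_symmetry M v (W_seq (\<lambda>p. (0, inverse (\<rho> p) *\<^sub>R B p)) (U_field \<phi> v B h) n)" by (rule SW)
qed

end


theorem proposition2:
  fixes D :: "(real^3) set"
    and v B :: "pt \<Rightarrow> real^3"
    and \<phi> :: "pt \<Rightarrow> real"
  defines "M \<equiv> (UNIV :: real set) \<times> D"
  defines "\<rho> \<equiv> (\<lambda>p. - (B p \<bullet> grad \<phi> p))"
  defines "W0 \<equiv> (\<lambda>p. (0, inverse (\<rho> p) *\<^sub>R B p))"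
  assumes D_open: "open D" and D_sc: "simply_connected D"
    and v_smooth: "smooth_on M v" and B_smooth: "smooth_on M B" and \<phi>_smooth: "smooth_on M \<phi>"
    and v_div: "\<forall>p\<in>M. divg v p = 0"
    and B_div: "\<forall>p\<in>M. divg B p = 0"
    and B_eq: "\<forall>p\<in>M. dt B p - curl (\<lambda>q. cross3 (v q) (B q)) p = 0"
    and \<phi>_eq: "\<forall>p\<in>M. dt \<phi> p + v p \<bullet> grad \<phi> p = 0"
    and \<rho>_nz: "\<forall>p\<in>M. \<rho> p \<noteq> 0"
  shows
    "(\<forall>h. smooth_on M h \<longrightarrow> hamiltonian_with M (Omega \<phi> v B) (U_field \<phi> v B h) h)
     \<and> hamiltonian_with M (Omega \<phi> v B) W0 fst
     \<and> inf_symmetry M v W0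
     \<and> (\<forall>h. smooth_on M h \<longrightarrow> (\<forall>p\<in>M. dt h p + v p \<bullet> grad h p = 0) \<longrightarrow>
          inf_symmetry M v (U_field \<phi> v B h)
          \<and> (\<forall>n. hamiltonian_vf M (Omega \<phi> v B) (W_seq W0 (U_field \<phi> v B h) n)
                 \<and> (\<forall>p\<in>M. \<forall>x y. lie_deriv2 (W_seq W0 (U_field \<phi> v B h) n) (Omega \<phi> v B) p x y = 0)
                 \<and> inf_symmetry M v (W_seq W0 (U_field \<phi> v B h) n)))"
proof -
  have st: "setting D v B \<phi> M"
    unfolding setting_def using D_open v_smooth B_smooth \<phi>_smooth v_div B_div B_eq \<phi>_eq \<rho>_nz
    by (simp add: M_def \<rho>_def)
  interpret setting D v B \<phi> M by (rule st)
  show ?thesis unfolding W0_def \<rho>_def by (rule main)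
qed


end
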